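(* Let $\Omega\subset\mathbb{R}^d$, $T_{\text{final}}>0$, and let $s=(s_1,\dots,s_{d_s})^\top$, $s_j:\Omega\times[0,T_{\text{final}})\to\mathcal{S}_j\subset\mathbb{R}$, be a (sufficiently smooth) solution of the nonlinear PDE $\partial s/\partial t=f(s)$, where $f=(f_1,\dots,f_{d_s})^\top$ is a differentiable nonlinear function (possibly involving spatial derivatives of $s$); write $\mathcal{S}=\mathcal{S}_1\times\cdots\times\mathcal{S}_{d_s}$. Let $\mathcal{T}:\mathcal{S}\to\mathcal{W}\subset\mathbb{R}^{d_w}$ be a quadratic lifting with Jacobian $\mathcal{J}$ and $\mathcal{T}^\dagger$ a reverse lifting map (definitions in context), so that $w=\mathcal{T}(s)$ satisfies $\partial w/\partial t=a(w)+h(w)$. Let $x_1,\dots,x_n\in\Omega$ be grid points, $\bar{\mathbf{s}}(t)\in\mathbb{R}^{nd_s}$ the vector with entries $\bar{\mathbf{s}}_{(j-1)n+l}(t)=s_j(x_l,t)$, and $\bar{\mathbf{w}}(t)=\mathbf{T}(\bar{\mathbf{s}}(t))$. Suppose that $\frac{d\mathbf{s}}{dt}=\mathbf{f}(\mathbf{s})$ (with $\mathbf{f}$ Lipschitz) is a consistent order-$p$ discretization of $\partial s/\partial t=f(s)$ and that $\frac{d\mathbf{w}}{dt}=\mathbf{A}\mathbf{w}+\mathbf{H}(\mathbf{w}\otimes\mathbf{w})$, with $\mathbf{A}\in\mathbb{R}^{nd_w\times nd_w}$, $\mathbf{H}\in\mathbb{R}^{nd_w\times n^2d_w^2}$, is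 a consistent order-$p$ discretization of $\partial w/\partial t=a(w)+h(w)$ (definitions in context). Then there is a constant $C$ independent of $n$ such that for all $t$, $$\left\|\mathbf{A}\bar{\mathbf{w}}+\mathbf{H}(\bar{\mathbf{w}}\otimes\bar{\mathbf{w}})-\mathbf{J}(\mathbf{T}^\dagger(\bar{\mathbf{w}}))\,\mathbf{f}(\mathbf{T}^\dagger(\bar{\mathbf{w}}))\right\|_2\le C\, n^{\frac12-p}.$$
   Context: Quadratic lifting: a map $\mathcal{T}:\mathcal{S}\to\mathcal{W}\subset\mathbb{R}^{d_w}$, $d_w\ge d_s$, differentiable in $s$ with Jacobian $\mathcal{J}(s)$ satisfying $\sup_{s\in\mathcal{S}}\|\mathcal{J}(s)\|\le c$ for some $c>0$, such that the lifted state $w(x,t)=\mathcal{T}(s(x,t))$ satisfies $\partial w/\partial t=a(w)+h(w)$ with $a=(a_1,\dots,a_{d_w})^\top$, $h=(h_1,\dots,h_{d_w})^\top$, each $a_j$ linear and each $h_j$ quadratic (these operators may involve spatial derivatives). Reverse lifting map: a map $\mathcal{T}^\dagger:\mathcal{W}\to\mathcal{S}$, differentiable with bounded derivative on $\mathcal{W}$, with $\mathcal{T}^\dagger(\mathcal{T}(s))=s$ for all $s\in\mathcal{S}$. Discrete maps: $\mathbf{T}:\mathbb{R}^{nd_s}\to\mathbb{R}^{nd_w}$ applies $\mathcal{T}$ node-wise, i.e. its $((j-1)n+l)$-th output is $\mathcal{T}_j$ applied to the $d_s$ state values at node $x_l$; $\mathbf{J}(\mathbf{s})\in\mathbb{R}^{nd_w\times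 nd_s}$ is the Jacobian of $\mathbf{T}$; $\mathbf{T}^\dagger$ applies $\mathcal{T}^\dagger$ node-wise. The semi-discrete model $\frac{d\mathbf{s}}{dt}=\mathbf{f}(\mathbf{s})$, $\mathbf{f}:\mathcal{S}^n\to\mathcal{S}^n$ Lipschitz, is a consistent order-$p$ discretization if there is $c_s>0$ with $|\mathbf{f}_{(j-1)n+l}(\bar{\mathbf{s}}(t))-f_j(s(x,t))|_{x=x_l}|\le c_s n^{-p}$ for all $t$, $j=1,\dots,d_s$, $l=1,\dots,n$. The lifted discrete model is a consistent order-$p$ discretization if there is $c_w>0$ with $|\mathbf{A}_{(j-1)n+l,:}\bar{\mathbf{w}}+\mathbf{H}_{(j-1)n+l,:}(\bar{\mathbf{w}}\otimes\bar{\mathbf{w}})-(a_j(w)+h_j(w))|_{x=x_l}|\le c_w n^{-p}$ for all $t$, $j=1,\dots,d_w$, $l=1,\dots,n$, where $\mathbf{M}_{i,:}$ denotes the $i$-th row. For $\mathbf{b}=(b_1,\dots,b_m)^\top$, $\mathbf{b}\otimes\mathbf{b}=(b_1^2,b_1b_2,\dots,b_1b_m,b_2b_1,\dots,b_m^2)^\top\in\mathbb{R}^{m^2}$. *)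

theory Defs
  imports "HOL-Analysis.Analysis"
begin

definition prod_set :: "('s::finite \<Rightarrow> real set) \<Rightarrow> (real^'s) set" where
  "prod_set Sj = {v. \<forall>j. v $ j \<in> Sj j}"

definition linear_op :: "(('x \<Rightarrow> 'v::real_vector) \<Rightarrow> 'x \<Rightarrow> 'v) \<Rightarrow> bool" where
  "linear_op a \<longleftrightarrow>
     (\<forall>u v. a (\<lambda>x. u x + v x) = (\<lambda>x. a u x + a v x)) \<and>
     (\<forall>c u. a (\<lambda>x. c *\<^sub>R u x) = (\<lambda>x. c *\<^sub>R a u x))"

definition quadratic_op :: "(('x \<Rightarrow> 'v::real_vector) \<Rightarrow> 'x \<Rightarrow> 'v) \<Rightarrow> bool" where
  "quadratic_op h \<longleftrightarrow>
     (\<forall>c u. h (\<lambda>x. c *\<^sub>R u x) = (\<lambda>x. (c^2) *\<^sub>R h u x)) \<and>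
     (let B = (\<lambda>u v x. h (\<lambda>y. u y + v y) x - h u x - h v x) in
       (\<forall>u u' v. B (\<lambda>y. u y + u' y) v = (\<lambda>x. B u v x + B u' v x)) \<and>
       (\<forall>c u v. B (\<lambda>y. c *\<^sub>R u y) v = (\<lambda>x. c *\<^sub>R B u v x)))"

definition quadratic_lifting ::
  "(real^'d) set \<Rightarrow> real \<Rightarrow> (real^'d \<Rightarrow> real \<Rightarrow> real^'s::finite) \<Rightarrow> (real^'s) set \<Rightarrow> (real^'w::finite) set
   \<Rightarrow> (real^'s \<Rightarrow> real^'w) \<Rightarrow> (real^'s \<Rightarrow> real^'s^'w) \<Rightarrow> real
   \<Rightarrow> ((real^'d \<Rightarrow> real^'w) \<Rightarrow> real^'d \<Rightarrow> real^'w)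
   \<Rightarrow> ((real^'d \<Rightarrow> real^'w) \<Rightarrow> real^'d \<Rightarrow> real^'w) \<Rightarrow> bool" where
  "quadratic_lifting \<Omega> Tf s S W T J c a h \<longleftrightarrow>
     T ` S \<subseteq> W \<and>
     (\<forall>v\<in>S. (T has_derivative (\<lambda>z. J v *v z)) (at v within S)) \<and>
     c > 0 \<and> (\<forall>v\<in>S. onorm (\<lambda>z. J v *v z) \<le> c) \<and>
     linear_op a \<and> quadratic_op h \<and>
     (\<forall>x\<in>\<Omega>. \<forall>t\<in>{0..<Tf}.
        ((\<lambda>\<tau>. T (s x \<tau>)) has_vector_derivative
           (a (\<lambda>y. T (s y t)) x + h (\<lambda>y. T (s y t)) x)) (at t within {0..<Tf}))"

definition reverse_lifting ::
  "(real^'s::finite) set \<Rightarrow> (real^'w::finite) set \<Rightarrow> (real^'s \<Rightarrow> real^'w) \<Rightarrow> (real^'w \<Rightarrow> real^'s) \<Rightarrow> bool" where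
  "reverse_lifting S W T Td \<longleftrightarrow>
     (\<forall>v\<in>S. Td (T v) = v) \<and>
     (\<exists>B. \<forall>w\<in>W. \<exists>D. (Td has_derivative D) (at w within W) \<and> onorm D \<le> B)"

text \<open>A discrete vector in R^(n d) is represented as a function on (component, node) pairs
  ('c \<times> nat), where the pair (j,l) stands for the index (j-1)n+l; only nodes l < n matter.\<close>

definition norm2 :: "nat \<Rightarrow> ('c::finite \<times> nat \<Rightarrow> real) \<Rightarrow> real" where
  "norm2 n v = sqrt (\<Sum>i\<in>UNIV \<times> {..<n}. (v i)^2)"

definition mat_vec :: "nat \<Rightarrow> ('r \<Rightarrow> ('c::finite \<times> nat) \<Rightarrow> real) \<Rightarrow> ('c \<times> nat \<Rightarrow> real) \<Rightarrow> 'r \<Rightarrow> real" where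
  "mat_vec n M v = (\<lambda>i. \<Sum>q\<in>UNIV \<times> {..<n}. M i q * v q)"

definition kron :: "('i \<Rightarrow> real) \<Rightarrow> ('i \<times> 'i \<Rightarrow> real)" where
  "kron b = (\<lambda>(q, q'). b q * b q')"

definition mat_vec2 :: "nat \<Rightarrow> ('r \<Rightarrow> (('c::finite \<times> nat) \<times> ('c \<times> nat)) \<Rightarrow> real)
                        \<Rightarrow> (('c \<times> nat) \<times> ('c \<times> nat) \<Rightarrow> real) \<Rightarrow> 'r \<Rightarrow> real" where
  "mat_vec2 n H z = (\<lambda>i. \<Sum>qq\<in>(UNIV \<times> {..<n}) \<times> (UNIV \<times> {..<n}). H i qq * z qq)"

definition disc_set :: "nat \<Rightarrow> ('s \<Rightarrow> real set) \<Rightarrow> ('s \<times> nat \<Rightarrow> real) set" where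
  "disc_set n Sj = {u. \<forall>j l. (l < n \<longrightarrow> u (j, l) \<in> Sj j) \<and> (n \<le> l \<longrightarrow> u (j, l) = 0)}"

definition sample :: "nat \<Rightarrow> (nat \<Rightarrow> real^'s::finite) \<Rightarrow> ('s \<times> nat \<Rightarrow> real)" where
  "sample n g = (\<lambda>(j, l). if l < n then g l $ j else 0)"

definition nodewise :: "nat \<Rightarrow> (real^'a::finite \<Rightarrow> real^'b::finite) \<Rightarrow> ('a \<times> nat \<Rightarrow> real) \<Rightarrow> ('b \<times> nat \<Rightarrow> real)" where
  "nodewise n F u = (\<lambda>(j, l). if l < n then F (\<chi> k. u (k, l)) $ j else 0)"

definition jac_disc :: "nat \<Rightarrow> (real^'s::finite \<Rightarrow> real^'s^'w::finite) \<Rightarrow> ('s \<times> nat \<Rightarrow> real)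
                        \<Rightarrow> ('w \<times> nat) \<Rightarrow> ('s \<times> nat) \<Rightarrow> real" where
  "jac_disc n J u = (\<lambda>(j, l) (k, l'). if l < n \<and> l' = l then J (\<chi> i. u (i, l)) $ j $ k else 0)"

definition lipschitz_disc :: "nat \<Rightarrow> ('s::finite \<Rightarrow> real set) \<Rightarrow> (('s \<times> nat \<Rightarrow> real) \<Rightarrow> ('s \<times> nat \<Rightarrow> real)) \<Rightarrow> bool" where
  "lipschitz_disc n Sj F \<longleftrightarrow> (\<exists>L. \<forall>u\<in>disc_set n Sj. \<forall>v\<in>disc_set n Sj.
      norm2 n (\<lambda>i. F u i - F v i) \<le> L * norm2 n (\<lambda>i. u i - v i))"

end

theory Submission
  imports Defs
begin


lemma norm2_bound:
  fixes v :: "'c::finite \<times> nat \<Rightarrow> real"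
  assumes "\<And>j l. l < n \<Longrightarrow> \<bar>v (j, l)\<bar> \<le> B" and "B \<ge> 0"
  shows "norm2 n v \<le> sqrt (real CARD('c) * real n) * B"
proof -
  have "(\<Sum>i\<in>UNIV \<times> {..<n}. (v i)^2) \<le> (\<Sum>i\<in>(UNIV::'c set) \<times> {..<n}. B^2)"
  proof (rule sum_mono)
    fix i assume "i \<in> (UNIV::'c set) \<times> {..<n}"
    then obtain j l where i: "i = (j, l)" "l < n" by auto
    have "\<bar>v i\<bar> \<le> B" using assms(1) i by auto
    then show "(v i)^2 \<le> B^2"
      by (metis abs_ge_zero abs_le_square_iff abs_of_nonneg assms(2) power2_abs)
  qed
  also have "\<dots> = real CARD('c) * real n * B^2"
    by (simp add: card_cartesian_product)
  finally have "norm2 n v \<le> sqrt (real CARD('c) * real n * B^2)"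
    unfolding norm2_def by (rule real_sqrt_le_mono)
  also have "\<dots> = sqrt (real CARD('c) * real n) * B"
    using assms(2) by (simp add: real_sqrt_mult)
  finally show ?thesis .
qed

lemma powr_half_split:
  fixes n :: nat assumes "n > 0"
  shows "sqrt (real n) * real n powr (-p) = real n powr (1/2 - p)"
proof -
  have "real n powr (1/2 - p) = real n powr (1/2) * real n powr (-p)"
    by (simp add: powr_add[symmetric])
  then show ?thesis using assms by (simp add: powr_half_sqrt)
qed

theorem lemma1:
  fixes \<Omega> :: "(real^'d::finite) set" and Tf :: real
    and s :: "real^'d \<Rightarrow> real \<Rightarrow> real^'s::finite"
    and Sj :: "'s \<Rightarrow> real set"
    and f :: "(real^'d \<Rightarrow> real^'s) \<Rightarrow> real^'d \<Rightarrow> real^'s"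
    and W :: "(real^'w::finite) set"
    and T :: "real^'s \<Rightarrow> real^'w" and J :: "real^'s \<Rightarrow> real^'s^'w" and c :: real
    and a h :: "(real^'d \<Rightarrow> real^'w) \<Rightarrow> real^'d \<Rightarrow> real^'w"
    and Td :: "real^'w \<Rightarrow> real^'s"
    and xg :: "nat \<Rightarrow> nat \<Rightarrow> real^'d"
    and fd :: "nat \<Rightarrow> ('s \<times> nat \<Rightarrow> real) \<Rightarrow> ('s \<times> nat \<Rightarrow> real)"
    and A :: "nat \<Rightarrow> ('w \<times> nat) \<Rightarrow> ('w \<times> nat) \<Rightarrow> real"
    and H :: "nat \<Rightarrow> ('w \<times> nat) \<Rightarrow> (('w \<times> nat) \<times> ('w \<times> nat)) \<Rightarrow> real"
    and p :: real
  assumes Tf_pos: "Tf > 0"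
    and sol_in: "\<forall>x\<in>\<Omega>. \<forall>t\<in>{0..<Tf}. s x t \<in> prod_set Sj"
    and pde: "\<forall>x\<in>\<Omega>. \<forall>t\<in>{0..<Tf}.
               ((\<lambda>\<tau>. s x \<tau>) has_vector_derivative f (\<lambda>y. s y t) x) (at t within {0..<Tf})"
    and lift: "quadratic_lifting \<Omega> Tf s (prod_set Sj) W T J c a h"
    and rev: "reverse_lifting (prod_set Sj) W T Td"
    and grid: "\<forall>n. \<forall>l<n. xg n l \<in> \<Omega>"
    and f_lip: "\<forall>n. lipschitz_disc n Sj (fd n)"
    and f_cons: "\<exists>cs>0. \<forall>n. \<forall>t\<in>{0..<Tf}. \<forall>j. \<forall>l<n.
        \<bar>fd n (sample n (\<lambda>l. s (xg n l) t)) (j, l) - f (\<lambda>y. s y t) (xg n l) $ j\<bar>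
          \<le> cs * real n powr (-p)"
    and w_cons: "\<exists>cw>0. \<forall>n. \<forall>t\<in>{0..<Tf}. \<forall>j. \<forall>l<n.
        (let wb = nodewise n T (sample n (\<lambda>l. s (xg n l) t)) in
         \<bar>mat_vec n (A n) wb (j, l) + mat_vec2 n (H n) (kron wb) (j, l)
           - (a (\<lambda>y. T (s y t)) (xg n l) + h (\<lambda>y. T (s y t)) (xg n l)) $ j\<bar>
          \<le> cw * real n powr (-p))"
  shows "\<exists>C. \<forall>n. \<forall>t\<in>{0..<Tf}.
    (let wb = nodewise n T (sample n (\<lambda>l. s (xg n l) t));
         sb = nodewise n Td wb in
     norm2 n (\<lambda>i. mat_vec n (A n) wb i + mat_vec2 n (H n) (kron wb) i
                  - mat_vec n (jac_disc n J sb) (fd n sb) i)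
       \<le> C * real n powr (1/2 - p))"
proof -
  obtain cs where cs: "cs > 0" "\<forall>n. \<forall>t\<in>{0..<Tf}. \<forall>j. \<forall>l<n.
        \<bar>fd n (sample n (\<lambda>l. s (xg n l) t)) (j, l) - f (\<lambda>y. s y t) (xg n l) $ j\<bar>
          \<le> cs * real n powr (-p)" using f_cons by blast
  obtain cw where cw: "cw > 0" "\<forall>n. \<forall>t\<in>{0..<Tf}. \<forall>j. \<forall>l<n.
        (let wb = nodewise n T (sample n (\<lambda>l. s (xg n l) t)) in
         \<bar>mat_vec n (A n) wb (j, l) + mat_vec2 n (H n) (kron wb) (j, l)
           - (a (\<lambda>y. T (s y t)) (xg n l) + h (\<lambda>y. T (s y t)) (xg n l)) $ j\<bar>
          \<le> cw * real n powr (-p))" using w_cons by blast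
  have L: "T ` prod_set Sj \<subseteq> W"
    "\<forall>v\<in>prod_set Sj. (T has_derivative (\<lambda>z. J v *v z)) (at v within prod_set Sj)"
    "c > 0" "\<forall>v\<in>prod_set Sj. onorm (\<lambda>z. J v *v z) \<le> c"
    "\<forall>x\<in>\<Omega>. \<forall>t\<in>{0..<Tf}.
        ((\<lambda>\<tau>. T (s x \<tau>)) has_vector_derivative
           (a (\<lambda>y. T (s y t)) x + h (\<lambda>y. T (s y t)) x)) (at t within {0..<Tf})"
    using lift unfolding quadratic_lifting_def by auto
  have Td: "\<forall>v\<in>prod_set Sj. Td (T v) = v" using rev unfolding reverse_lifting_def by auto
  have key: "J (s x t) *v f (\<lambda>y. s y t) x = a (\<lambda>y. T (s y t)) x + h (\<lambda>y. T (s y t)) x"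
    if x: "x \<in> \<Omega>" and t: "t \<in> {0..<Tf}" for x t
  proof -
    have d1: "((\<lambda>\<tau>. s x \<tau>) has_vector_derivative f (\<lambda>y. s y t) x) (at t within {0..<Tf})"
      using pde x t by auto
    have sub: "(\<lambda>\<tau>. s x \<tau>) ` {0..<Tf} \<subseteq> prod_set Sj" using sol_in x by auto
    have "s x t \<in> prod_set Sj" using sol_in x t by auto
    then have dT: "(T has_derivative (\<lambda>z. J (s x t) *v z)) (at (s x t) within (\<lambda>\<tau>. s x \<tau>) ` {0..<Tf})"
      using L(2) sub has_derivative_subset by blast
    have "((T \<circ> (\<lambda>\<tau>. s x \<tau>)) has_vector_derivative (J (s x t) *v f (\<lambda>y. s y t) x)) (at t within {0..<Tf})"
      using vector_derivative_diff_chain_within[OF d1 dT] by simp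
    then have d2: "((\<lambda>\<tau>. T (s x \<tau>)) has_vector_derivative (J (s x t) *v f (\<lambda>y. s y t) x)) (at t within {0..<Tf})"
      by (simp add: o_def)
    have nb: "at t within {0..<Tf} \<noteq> bot"
      using t Tf_pos by (simp add: trivial_limit_within)
    show ?thesis using vector_derivative_unique_within[OF nb d2] L(5) x t by blast
  qed
  define K where "K = cw + c * real CARD('s) * cs"
  have K0: "K \<ge> 0" unfolding K_def using cs cw L(3) by simp
  show ?thesis
  proof (rule exI[of _ "sqrt (real CARD('w)) * K"], intro allI ballI)
    fix n t assume t: "t \<in> {0..<Tf}"
    define wb where "wb = nodewise n T (sample n (\<lambda>l. s (xg n l) t))"
    define sb where "sb = nodewise n Td wb"
    have sbeq: "sb = sample n (\<lambda>l. s (xg n l) t)"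
    proof
      fix i :: "'s \<times> nat"
      obtain j l where i: "i = (j, l)" by fastforce
      show "sb i = sample n (\<lambda>l. s (xg n l) t) i"
      proof (cases "l < n")
        case True
        have inS: "s (xg n l) t \<in> prod_set Sj" using sol_in grid True t by auto
        have "(\<chi> k. wb (k, l)) = T (s (xg n l) t)"
          unfolding wb_def nodewise_def sample_def using True by (simp add: vec_eq_iff)
        then show ?thesis unfolding sb_def nodewise_def sample_def i using True Td inS
          by (simp add: vec_eq_iff)
      next
        case False
        then show ?thesis unfolding sb_def nodewise_def sample_def i by simp
      qed
    qed
    define r where "r = (\<lambda>i. mat_vec n (A n) wb i + mat_vec2 n (H n) (kron wb) i
                  - mat_vec n (jac_disc n J sb) (fd n sb) i)"
    have comp: "\<bar>r (j, l)\<bar> \<le> K * real n powr (-p)" if l: "l < n" for j l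
    proof -
      let ?x = "xg n l"
      have x: "?x \<in> \<Omega>" using grid l by auto
      have inS: "s ?x t \<in> prod_set Sj" using sol_in x t by auto
      define e where "e = (\<chi> k. fd n sb (k, l) - f (\<lambda>y. s y t) ?x $ k)"
      have jac: "mat_vec n (jac_disc n J sb) (fd n sb) (j, l) = (\<Sum>k\<in>UNIV. J (s ?x t) $ j $ k * fd n sb (k, l))"
      proof -
        have "mat_vec n (jac_disc n J sb) (fd n sb) (j, l)
            = (\<Sum>k\<in>UNIV. \<Sum>l'\<in>{..<n}. (if l' = l then J (\<chi> i. sb (i, l)) $ j $ k else 0) * fd n sb (k, l'))"
          unfolding mat_vec_def jac_disc_def using l by (simp only: sum.cartesian_product case_prod_unfold fst_conv snd_conv prod.collapse simp_thms)
        also have "\<dots> = (\<Sum>k\<in>UNIV. \<Sum>l'\<in>{..<n}. (if l' = l then J (\<chi> i. sb (i, l)) $ j $ k * fd n sb (k, l') else 0))"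
          by (intro sum.cong) auto
        also have "\<dots> = (\<Sum>k\<in>UNIV. J (\<chi> i. sb (i, l)) $ j $ k * fd n sb (k, l))"
          using l by simp
        also have "(\<chi> i. sb (i, l)) = s ?x t"
          unfolding sbeq sample_def using l by (simp add: vec_eq_iff)
        finally show ?thesis .
      qed
      have "(J (s ?x t) *v (\<chi> k. fd n sb (k, l))) $ j - (a (\<lambda>y. T (s y t)) ?x + h (\<lambda>y. T (s y t)) ?x) $ j
          = (J (s ?x t) *v e) $ j"
      proof -
        have "e = (\<chi> k. fd n sb (k, l)) - f (\<lambda>y. s y t) ?x" unfolding e_def by (simp add: vec_eq_iff)
        then have "J (s ?x t) *v e = J (s ?x t) *v (\<chi> k. fd n sb (k, l)) - (a (\<lambda>y. T (s y t)) ?x + h (\<lambda>y. T (s y t)) ?x)"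
          using key[OF x t] by (simp add: matrix_vector_mult_diff_distrib)
        then show ?thesis by simp
      qed
      moreover have "(J (s ?x t) *v (\<chi> k. fd n sb (k, l))) $ j = (\<Sum>k\<in>UNIV. J (s ?x t) $ j $ k * fd n sb (k, l))"
        by (simp add: matrix_vector_mult_def)
      ultimately have split: "r (j, l) = (mat_vec n (A n) wb (j, l) + mat_vec2 n (H n) (kron wb) (j, l)
           - (a (\<lambda>y. T (s y t)) ?x + h (\<lambda>y. T (s y t)) ?x) $ j) - (J (s ?x t) *v e) $ j"
        unfolding r_def jac by simp
      have b1: "\<bar>mat_vec n (A n) wb (j, l) + mat_vec2 n (H n) (kron wb) (j, l)
           - (a (\<lambda>y. T (s y t)) ?x + h (\<lambda>y. T (s y t)) ?x) $ j\<bar> \<le> cw * real n powr (-p)"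
        using cw(2) t l unfolding wb_def Let_def by blast
      have ek: "\<bar>e $ k\<bar> \<le> cs * real n powr (-p)" for k
        using cs(2) t l unfolding e_def sbeq by simp
      have ne: "norm e \<le> real CARD('s) * (cs * real n powr (-p))"
      proof -
        have "norm e \<le> (\<Sum>k\<in>UNIV. \<bar>e $ k\<bar>)" by (rule norm_le_l1_cart)
        also have "\<dots> \<le> (\<Sum>k\<in>(UNIV::'s set). cs * real n powr (-p))" by (rule sum_mono) (rule ek)
        finally show ?thesis by simp
      qed
      have "\<bar>(J (s ?x t) *v e) $ j\<bar> \<le> norm (J (s ?x t) *v e)" by (rule component_le_norm_cart)
      also have "\<dots> \<le> onorm (\<lambda>z. J (s ?x t) *v z) * norm e"
        by (rule onorm) (rule matrix_vector_mul_bounded_linear)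
      also have "\<dots> \<le> c * norm e"
        using L(4) inS by (simp add: mult_right_mono)
      also have "\<dots> \<le> c * (real CARD('s) * (cs * real n powr (-p)))"
        using ne L(3) by (simp add: mult_left_mono)
      finally have b2: "\<bar>(J (s ?x t) *v e) $ j\<bar> \<le> c * real CARD('s) * cs * real n powr (-p)" by simp
      have "\<bar>r (j, l)\<bar> \<le> cw * real n powr (-p) + c * real CARD('s) * cs * real n powr (-p)"
        unfolding split using b1 b2 by linarith
      then show ?thesis unfolding K_def by (simp add: algebra_simps)
    qed
    have "norm2 n r \<le> sqrt (real CARD('w) * real n) * (K * real n powr (-p))"
      by (rule norm2_bound) (use comp K0 in auto)
    also have "\<dots> = sqrt (real CARD('w)) * K * real n powr (1/2 - p)"
    proof (cases "n = 0")
      case True then show ?thesis by simp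
    next
      case False
      then have "sqrt (real n) * real n powr (-p) = real n powr (1/2 - p)"
        using powr_half_split by blast
      then show ?thesis by (simp add: real_sqrt_mult algebra_simps)
    qed
    finally show "let wb = nodewise n T (sample n (\<lambda>l. s (xg n l) t));
         sb = nodewise n Td wb in
     norm2 n (\<lambda>i. mat_vec n (A n) wb i + mat_vec2 n (H n) (kron wb) i
                  - mat_vec n (jac_disc n J sb) (fd n sb) i)
       \<le> sqrt (real CARD('w)) * K * real n powr (1/2 - p)"
      unfolding Let_def r_def wb_def sb_def .
  qed
qed

end
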